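(* Let $J,L\subseteq S$ with $n:=\#J\ge2$, $J\setminus\{j_1,j_n\}=L\setminus\{l_1\}$ and $j_1<l_1$. Then in $A$: $$\tau^-_J-\tau^-_Lt_{j_n}-\sum_{i=2}^{n-1}(-1)^i\tau^-_{(J\cup L)\setminus\{j_i\}}+(-1)^nt_{j_1}\tau^-_L=0.$$
   Context: $S$ is a finite set with a total order $<$, $R$ a commutative ring with $1$, $q\in R$, $A=R\langle t_s\mid s\in S\rangle$ the free associative algebra. Subsets are enumerated increasingly: $J=\{j_1<\dots<j_{\#J}\}$, $L=\{l_1<\dots\}$. $t_J=t_{j_1}\cdots t_{j_{\#J}}$; for $I=\{j_{\alpha_1}<\dots<j_{\alpha_{\#I}}\}\subseteq J$, $\ell_J(I)=\sum_\nu(\alpha_\nu-\nu)$; $\tau^-_J=\sum_{I\subseteq J,\ \#I\text{ odd}}(-1)^{\ell_J(I)}(-q)^{(\#I-1)/2}t_{J\setminus I}$. *)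

theory Defs
  imports Main
begin

text \<open>Free associative algebra R<t_s | s in S>: an element is represented by its
coefficient function on words (lists of generators); the product is the
concatenation convolution.\<close>

type_synonym ('a, 'r) falg = "'a list \<Rightarrow> 'r"

definition fa_zero :: "('a, 'r::comm_ring_1) falg" where
  "fa_zero = (\<lambda>w. 0)"

definition fa_add :: "('a, 'r::comm_ring_1) falg \<Rightarrow> ('a, 'r) falg \<Rightarrow> ('a, 'r) falg" where
  "fa_add f g = (\<lambda>w. f w + g w)"

definition fa_sub :: "('a, 'r::comm_ring_1) falg \<Rightarrow> ('a, 'r) falg \<Rightarrow> ('a, 'r) falg" where
  "fa_sub f g = (\<lambda>w. f w - g w)"

definition fa_smult :: "'r::comm_ring_1 \<Rightarrow> ('a, 'r) falg \<Rightarrow> ('a, 'r) falg" where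
  "fa_smult c f = (\<lambda>w. c * f w)"

definition fa_sum :: "('b \<Rightarrow> ('a, 'r::comm_ring_1) falg) \<Rightarrow> 'b set \<Rightarrow> ('a, 'r) falg" where
  "fa_sum F X = (\<lambda>w. \<Sum>x\<in>X. F x w)"

definition fa_mult :: "('a, 'r::comm_ring_1) falg \<Rightarrow> ('a, 'r) falg \<Rightarrow> ('a, 'r) falg" where
  "fa_mult f g = (\<lambda>w. \<Sum>k\<le>length w. f (take k w) * g (drop k w))"

definition fa_mono :: "'a list \<Rightarrow> ('a, 'r::comm_ring_1) falg" where
  "fa_mono u = (\<lambda>w. if w = u then 1 else 0)"

text \<open>t_J = t_{j_1} ... t_{j_#J} with J enumerated increasingly.\<close>
definition tJ :: "'a::linorder set \<Rightarrow> ('a, 'r::comm_ring_1) falg" where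
  "tJ J = fa_mono (sorted_list_of_set J)"

text \<open>j_i, the i-th smallest element of J (1-based).\<close>
definition elt :: "'a::linorder set \<Rightarrow> nat \<Rightarrow> 'a" where
  "elt J i = sorted_list_of_set J ! (i - 1)"

text \<open>ell_J(I) = sum_nu (alpha_nu - nu), where I = {j_{alpha_1} < ... } (1-based positions);
  alpha_nu is the rank of the nu-th element of I within J.\<close>
definition ellJ :: "'a::linorder set \<Rightarrow> 'a set \<Rightarrow> nat" where
  "ellJ J I = (\<Sum>\<nu>\<in>{1..card I}.
      card {j\<in>J. j \<le> elt I \<nu>} - \<nu>)"

definition tau_minus :: "'r::comm_ring_1 \<Rightarrow> 'a::linorder set \<Rightarrow> ('a, 'r) falg" where
  "tau_minus q J = fa_sum (\<lambda>I. fa_smult ((-1) ^ ellJ J I * (- q) ^ ((card I - 1) div 2)) (tJ (J - I)))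
       {I. I \<subseteq> J \<and> odd (card I)}"

end

theory Submission
  imports Defs
begin

definition coef :: "'r::comm_ring_1 \<Rightarrow> 'a::linorder set \<Rightarrow> 'a set \<Rightarrow> 'r" where
  "coef q X W = (if W \<subseteq> X \<and> odd (card (X - W)) then
      (-1) ^ ellJ X (X - W) * (- q) ^ ((card (X - W) - 1) div 2) else 0)"

lemma tau_eval:
  assumes "finite X"
  shows "tau_minus q X w = (if sorted_wrt (<) w then coef q X (set w) else 0)"
proof -
  let ?c = "\<lambda>I. (-1) ^ ellJ X I * (- q) ^ ((card I - 1) div 2)"
  have A: "tau_minus q X w = (\<Sum>I\<in>{I. I \<subseteq> X \<and> odd (card I)}. 
       (if w = sorted_list_of_set (X - I) then ?c I else 0))"
    by (auto simp: tau_minus_def fa_sum_def fa_smult_def tJ_def fa_mono_def intro!: sum.cong)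
  show ?thesis
  proof (cases "sorted_wrt (<) w \<and> set w \<subseteq> X")
    case True
    have eq: "\<And>I. I \<subseteq> X \<Longrightarrow> (w = sorted_list_of_set (X - I)) = (I = X - set w)"
    proof -
      fix I assume I: "I \<subseteq> X"
      have "(w = sorted_list_of_set (X - I)) = (set w = X - I)"
        using True assms sorted_list_of_set_unique[of "X - I" w]
        by (metis distinct_card finite_Diff strict_sorted_iff)
      also have "\<dots> = (I = X - set w)" using I True by blast
      finally show "(w = sorted_list_of_set (X - I)) = (I = X - set w)" .
    qed
    have "tau_minus q X w = (\<Sum>I\<in>{I. I \<subseteq> X \<and> odd (card I)}. (if I = X - set w then ?c I else 0))"
      unfolding A by (rule sum.cong) (auto simp: eq)
    also have "\<dots> = (if odd (card (X - set w)) then ?c (X - set w) else 0)"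
      using assms by (subst sum.delta) auto
    finally show ?thesis using True by (simp add: coef_def)
  next
    case False
    have "tau_minus q X w = 0" unfolding A
      apply (rule sum.neutral)
      using False assms by (auto simp: strict_sorted_list_of_set)
    then show ?thesis using False by (auto simp: coef_def)
  qed
qed

definition invc :: "'a::linorder set \<Rightarrow> 'a set \<Rightarrow> nat" where
  "invc X W = (\<Sum>y\<in>X - W. card {w\<in>W. w < y})"

lemma rank_nth:
  assumes "finite I" "k < card I"
  shows "card {j\<in>I. j \<le> sorted_list_of_set I ! k} = Suc k"
proof -
  let ?s = "sorted_list_of_set I"
  have len: "length ?s = card I" by simp
  have ss: "sorted_wrt (<) ?s" by simp
  have "{j\<in>I. j \<le> ?s ! k} = set (take (Suc k) ?s)"
  proof (intro equalityI subsetI)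
    fix x assume "x \<in> {j\<in>I. j \<le> ?s ! k}"
    then have xI: "x \<in> set ?s" and xle: "x \<le> ?s ! k" using assms by auto
    then obtain i where i: "i < length ?s" "?s ! i = x" by (auto simp: in_set_conv_nth)
    have "i \<le> k"
    proof (rule ccontr)
      assume "\<not> i \<le> k" then have "k < i" by simp
      then have "?s ! k < ?s ! i" using ss i by (auto simp: sorted_wrt_iff_nth_less)
      then show False using xle i by simp
    qed
    then show "x \<in> set (take (Suc k) ?s)" using i
      by (metis in_set_conv_nth length_take min_less_iff_conj nth_take less_Suc_eq_le)
  next
    fix x assume "x \<in> set (take (Suc k) ?s)"
    then obtain i where i: "i < length (take (Suc k) ?s)" "take (Suc k) ?s ! i = x"
      by (auto simp: in_set_conv_nth)
    then have ik: "i \<le> k" "i < length ?s" and xi: "x = ?s ! i" by auto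
    have "x \<in> I" using xi ik assms by (metis nth_mem set_sorted_list_of_set)
    moreover have "x \<le> ?s ! k"
    proof (cases "i = k")
      case True then show ?thesis using xi by simp
    next
      case False then have "i < k" using ik by simp
      then show ?thesis using ss xi assms len by (simp add: sorted_wrt_iff_nth_less less_imp_le)
    qed
    ultimately show "x \<in> {j\<in>I. j \<le> ?s ! k}" by simp
  qed
  moreover have "distinct (take (Suc k) ?s)" by simp
  ultimately show ?thesis using assms by (simp add: distinct_card min_def)
qed

lemma elt_bij:
  assumes "finite I"
  shows "bij_betw (elt I) {1..card I} I"
proof -
  have "bij_betw (\<lambda>i. sorted_list_of_set I ! i) {0..<card I} I"
    using assms by (metis bij_betw_nth distinct_sorted_list_of_set length_sorted_list_of_set
        set_sorted_list_of_set atLeast0LessThan)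
  moreover have "bij_betw (\<lambda>i. i - 1) {1..card I} {0..<card I}"
    by (rule bij_betw_byWitness[where f'=Suc]) auto
  ultimately have "bij_betw ((\<lambda>i. sorted_list_of_set I ! i) \<circ> (\<lambda>i. i - 1)) {1..card I} I"
    using bij_betw_trans by blast
  then show ?thesis unfolding comp_def elt_def[abs_def] .
qed

lemma rank_elt:
  assumes "finite I" "1 \<le> i" "i \<le> card I"
  shows "card {j\<in>I. j \<le> elt I i} = i"
  using rank_nth[OF assms(1), of "i - 1"] assms by (simp add: elt_def)

lemma ellJ_invc:
  assumes "finite X" "W \<subseteq> X"
  shows "ellJ X (X - W) = invc X W"
proof -
  let ?I = "X - W"
  have fI: "finite ?I" using assms by simp
  have "ellJ X ?I = (\<Sum>\<nu>\<in>{1..card ?I}. card {w\<in>W. w < elt ?I \<nu>})"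
    unfolding ellJ_def
  proof (rule sum.cong[OF refl])
    fix \<nu> assume "\<nu> \<in> {1..card ?I}"
    then have nu: "1 \<le> \<nu>" "\<nu> \<le> card ?I" by auto
    have yI: "elt ?I \<nu> \<in> ?I" using elt_bij[OF fI] nu by (auto simp: bij_betw_def)
    let ?y = "elt ?I \<nu>"
    have "{j\<in>X. j \<le> ?y} = {w\<in>W. w < ?y} \<union> {j\<in>?I. j \<le> ?y}"
      using yI assms(2) by (auto simp: order.order_iff_strict)
    moreover have "{w\<in>W. w < ?y} \<inter> {j\<in>?I. j \<le> ?y} = {}" by auto
    ultimately have "card {j\<in>X. j \<le> ?y} = card {w\<in>W. w < ?y} + card {j\<in>?I. j \<le> ?y}"
      using assms by (simp add: card_Un_disjoint finite_subset)
    then show "card {j\<in>X. j \<le> ?y} - \<nu> = card {w\<in>W. w < ?y}"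
      using rank_elt[OF fI nu] by simp
  qed
  also have "\<dots> = (\<Sum>y\<in>?I. card {w\<in>W. w < y})"
    using sum.reindex_bij_betw[OF elt_bij[OF fI], of "\<lambda>y. card {w\<in>W. w < y}"] by simp
  finally show ?thesis by (simp add: invc_def)
qed

lemma invc_remove_Y:
  assumes "finite X" "u \<in> X" "u \<notin> W"
  shows "invc X W = invc (X - {u}) W + card {w\<in>W. w < u}"
proof -
  have "X - {u} - W = (X - W) - {u}" by auto
  then show ?thesis unfolding invc_def using assms
    by (simp add: sum.remove[of "X - W" u] add.commute)
qed

lemma invc_remove_W:
  assumes "finite X" "u \<in> W" "W \<subseteq> X"
  shows "invc X W = invc (X - {u}) (W - {u}) + card {y\<in>X - W. u < y}"
proof -
  have e: "X - {u} - (W - {u}) = X - W" using assms by auto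
  have "\<And>y. y \<in> X - W \<Longrightarrow> card {w\<in>W. w < y} = card {w\<in>W - {u}. w < y} + (if u < y then 1 else 0)"
  proof -
    fix y assume "y \<in> X - W"
    have fW: "finite W" using assms finite_subset by blast
    show "card {w\<in>W. w < y} = card {w\<in>W - {u}. w < y} + (if u < y then 1 else 0)"
    proof (cases "u < y")
      case True
      then have "{w\<in>W. w < y} = insert u {w\<in>W - {u}. w < y}" using assms by auto
      then show ?thesis using True fW by simp
    next
      case False
      then have "{w\<in>W. w < y} = {w\<in>W - {u}. w < y}" by auto
      then show ?thesis using False by simp
    qed
  qed
  then have "invc X W = (\<Sum>y\<in>X - W. card {w\<in>W - {u}. w < y} + (if u < y then 1 else 0))"
    unfolding invc_def by (rule sum.cong[OF refl])
  also have "\<dots> = invc (X - {u}) (W - {u}) + card {y\<in>X - W. u < y}"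
    unfolding invc_def e sum.distrib using assms
    by (simp add: sum.If_cases Int_def)
  finally show ?thesis .
qed


lemma alt_sum:
  fixes Y :: "'a::linorder set"
  assumes "finite Y"
  shows "(\<Sum>u\<in>Y. (-1::'r::comm_ring_1) ^ card {y\<in>Y. y \<le> u}) = (if even (card Y) then 0 else -1)"
  using assms
proof (induction "card Y" arbitrary: Y)
  case 0
  then show ?case by simp
next
  case (Suc k)
  then have ne: "Y \<noteq> {}" by auto
  define M where "M = Max Y"
  have MY: "M \<in> Y" using Suc ne by (simp add: M_def)
  have Mmax: "\<And>y. y \<in> Y \<Longrightarrow> y \<le> M" using Suc by (simp add: M_def)
  have cY': "card (Y - {M}) = k" using Suc MY by simp
  have IH: "(\<Sum>u\<in>Y - {M}. (-1::'r) ^ card {y\<in>Y - {M}. y \<le> u}) = (if even k then 0 else -1)"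
    using Suc(1)[of "Y - {M}"] cY' Suc by simp
  have e1: "\<And>u. u \<in> Y - {M} \<Longrightarrow> {y\<in>Y. y \<le> u} = {y\<in>Y - {M}. y \<le> u}"
    using Mmax by (auto, metis antisym)
  have e2: "{y\<in>Y. y \<le> M} = Y" using Mmax by auto
  have "(\<Sum>u\<in>Y. (-1::'r) ^ card {y\<in>Y. y \<le> u}) =
        (-1) ^ card Y + (\<Sum>u\<in>Y - {M}. (-1::'r) ^ card {y\<in>Y. y \<le> u})"
    using sum.remove[OF Suc(3) MY, of "\<lambda>u. (-1::'r) ^ card {y\<in>Y. y \<le> u}"] e2 by simp
  also have "\<dots> = (-1) ^ card Y + (\<Sum>u\<in>Y - {M}. (-1::'r) ^ card {y\<in>Y - {M}. y \<le> u})"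
    by (rule arg_cong[where f="\<lambda>x. _ + x"], rule sum.cong[OF refl], subst e1) auto
  finally show ?case using IH Suc(2)[symmetric] by simp
qed

lemma m1pow_add: "(-1::'r::comm_ring_1) ^ (a + b) = (-1) ^ a * (-1) ^ b" by (simp add: power_add)

lemma aux2: "(x::'a::ab_group_add) + (y + s) = 0 \<Longrightarrow> s = - x - y"
  by (metis add.commute add_diff_cancel_left' diff_0 diff_diff_eq)

lemma odd_m1: "1 \<le> m \<Longrightarrow> odd (m - 1) = even (m::nat)" by (cases m) auto

lemma generic:
  fixes U :: "'a::linorder set" and q :: "'r::comm_ring_1"
  assumes fU: "finite U" and aU: "a \<in> U" and dU: "d \<in> U" and ad: "a < d"
    and bnd: "\<forall>x\<in>U. a \<le> x \<and> x \<le> d"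
  shows "(\<Sum>u\<in>U - {a, d}. (-1) ^ card {x\<in>U. x \<le> u} * coef q (U - {u}) W) =
    (if d \<in> W then coef q (U - {a, d}) (W - {d}) else 0)
    + (-1) ^ card U * (if a \<in> W then coef q (U - {a, d}) (W - {a}) else 0)"
proof (cases "W \<subseteq> U")
  case False
  then obtain z where z: "z \<in> W" "z \<notin> U" by auto
  then have "z \<noteq> d" "z \<noteq> a" using aU dU by auto
  have "\<And>u. coef q (U - {u}) W = 0" using z by (auto simp: coef_def)
  moreover have "coef q (U - {a, d}) (W - {d}) = 0" using z \<open>z \<noteq> d\<close> by (auto simp: coef_def)
  moreover have "coef q (U - {a, d}) (W - {a}) = 0" using z \<open>z \<noteq> a\<close> by (auto simp: coef_def)
  ultimately show ?thesis by simp
next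
  case WU: True
  define Y where "Y = U - W"
  define m where "m = card Y"
  define C where "C = invc U W"
  define Q where "Q = (- q) ^ ((m - 2) div 2)"
  have fY: "finite Y" using fU by (simp add: Y_def)
  have fW: "finite W" using fU WU finite_subset by blast
  have cardU: "card U = card W + m" unfolding m_def Y_def
    using WU fU by (metis card_Diff_subset fW card_mono le_add_diff_inverse)
  have hterm: "(-1) ^ card {x\<in>U. x \<le> u} * coef q (U - {u}) W =
      (if u \<in> Y \<and> even m then (-1) ^ C * (-1) ^ card {y\<in>Y. y \<le> u} * Q else 0)"
    if uU: "u \<in> U" for u
  proof (cases "u \<in> Y")
    case False
    then have "u \<in> W" using uU Y_def by auto
    then have "\<not> W \<subseteq> U - {u}" by auto
    then show ?thesis using False by (simp add: coef_def)
  next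
    case True
    have uW: "u \<notin> W" using True Y_def by auto
    have d1: "U - {u} - W = Y - {u}" by (auto simp: Y_def)
    have cd: "card (Y - {u}) = m - 1" using True fY m_def by simp
    have m1: "m \<ge> 1" using True fY m_def card_0_eq by fastforce
    have pm: "odd (card (Y - {u})) = even m" using cd odd_m1[OF m1] by simp
    have pos: "card {x\<in>U. x \<le> u} = card {w\<in>W. w < u} + card {y\<in>Y. y \<le> u}"
    proof -
      have "{x\<in>U. x \<le> u} = {w\<in>W. w < u} \<union> {y\<in>Y. y \<le> u}"
        using WU uW Y_def by (auto simp: order.order_iff_strict)
      moreover have "{w\<in>W. w < u} \<inter> {y\<in>Y. y \<le> u} = {}" using Y_def by auto
      ultimately show ?thesis using fW fY by (simp add: card_Un_disjoint)
    qed
    have Ceq: "C = invc (U - {u}) W + card {w\<in>W. w < u}"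
      using invc_remove_Y[OF fU uU uW] C_def by simp
    have ell: "ellJ (U - {u}) (U - {u} - W) = invc (U - {u}) W"
      using ellJ_invc[of "U - {u}" W] fU WU uW by auto
    have "(-1::'r) ^ card {x\<in>U. x \<le> u} * (-1) ^ invc (U - {u}) W = (-1) ^ C * (-1) ^ card {y\<in>Y. y \<le> u}"
      unfolding pos Ceq power_add[symmetric] by (simp add: algebra_simps)
    moreover have "coef q (U - {u}) W = (if even m then (-1) ^ invc (U - {u}) W * Q else 0)"
      using WU uW d1 cd m1 ell pm unfolding coef_def Q_def
      by (auto simp: diff_diff_add numeral_2_eq_2)
    ultimately show ?thesis using True
      by (auto simp: mult.assoc[symmetric])
  qed
  have ya: "a \<in> Y \<Longrightarrow> card {y\<in>Y. y \<le> a} = 1"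
  proof -
    assume "a \<in> Y" then have "{y\<in>Y. y \<le> a} = {a}" using bnd Y_def by (auto intro: antisym)
    then show ?thesis by simp
  qed
  have yd: "d \<in> Y \<Longrightarrow> card {y\<in>Y. y \<le> d} = m"
  proof -
    assume "d \<in> Y" then have "{y\<in>Y. y \<le> d} = Y" using bnd Y_def by auto
    then show ?thesis by (simp add: m_def)
  qed
  have sumY: "(\<Sum>u\<in>Y - {a, d}. (-1::'r) ^ card {y\<in>Y. y \<le> u}) =
      (if even m then (if a \<in> Y then 1 else 0) - (if d \<in> Y then 1 else 0)
       else (\<Sum>u\<in>Y - {a, d}. (-1::'r) ^ card {y\<in>Y. y \<le> u}))"
  proof (cases "even m")
    case True
    have S: "(\<Sum>u\<in>Y. (-1::'r) ^ card {y\<in>Y. y \<le> u}) = 0" using alt_sum[OF fY] True m_def by simp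
    have splitY: "Y = (Y - {a, d}) \<union> (Y \<inter> {a, d})" by blast
    have "(\<Sum>u\<in>Y. (-1::'r) ^ card {y\<in>Y. y \<le> u}) = (\<Sum>u\<in>Y - {a, d}. (-1::'r) ^ card {y\<in>Y. y \<le> u})
        + (\<Sum>u\<in>Y \<inter> {a, d}. (-1::'r) ^ card {y\<in>Y. y \<le> u})"
      using fY by (subst splitY, subst sum.union_disjoint) auto
    moreover have "(\<Sum>u\<in>Y \<inter> {a, d}. (-1::'r) ^ card {y\<in>Y. y \<le> u}) = 
        (if a \<in> Y then -1 else 0) + (if d \<in> Y then 1 else 0)"
    proof (cases "a \<in> Y"; cases "d \<in> Y")
      assume "a \<in> Y" "d \<in> Y"
      then have "Y \<inter> {a, d} = {a, d}" by blast
      then show ?thesis using ad ya yd True \<open>a \<in> Y\<close> \<open>d \<in> Y\<close> by simp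
    next
      assume "a \<in> Y" "d \<notin> Y"
      then have "Y \<inter> {a, d} = {a}" by blast
      then show ?thesis using ya \<open>a \<in> Y\<close> \<open>d \<notin> Y\<close> by simp
    next
      assume "a \<notin> Y" "d \<in> Y"
      then have "Y \<inter> {a, d} = {d}" by blast
      then show ?thesis using yd True \<open>a \<notin> Y\<close> \<open>d \<in> Y\<close> by simp
    next
      assume "a \<notin> Y" "d \<notin> Y"
      then have "Y \<inter> {a, d} = {}" by blast
      then show ?thesis using \<open>a \<notin> Y\<close> \<open>d \<notin> Y\<close> by simp
    qed
    ultimately have "(if a \<in> Y then -1 else 0) + ((if d \<in> Y then 1 else 0) +
        (\<Sum>u\<in>Y - {a, d}. (-1::'r) ^ card {y\<in>Y. y \<le> u})) = 0"
      using S by (simp add: ac_simps)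
    from aux2[OF this] show ?thesis using True by (cases "a \<in> Y"; cases "d \<in> Y") simp_all
  qed simp
  have LHS: "(\<Sum>u\<in>U - {a, d}. (-1) ^ card {x\<in>U. x \<le> u} * coef q (U - {u}) W) =
     (if even m then (-1) ^ C * Q * ((if a \<in> Y then 1 else 0) - (if d \<in> Y then 1 else 0)) else 0)"
  proof -
    have "(\<Sum>u\<in>U - {a, d}. (-1) ^ card {x\<in>U. x \<le> u} * coef q (U - {u}) W) =
       (\<Sum>u\<in>U - {a, d}. (if u \<in> Y \<and> even m then (-1) ^ C * (-1) ^ card {y\<in>Y. y \<le> u} * Q else 0))"
      using hterm by (intro sum.cong) auto
    also have "\<dots> = (if even m then (\<Sum>u\<in>Y - {a, d}. (-1) ^ C * (-1) ^ card {y\<in>Y. y \<le> u} * Q) else 0)"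
    proof (cases "even m")
      case True
      have "{u\<in>U - {a, d}. u \<in> Y} = Y - {a, d}" using Y_def by auto
      then show ?thesis using True fU sum.inter_filter[of "U - {a, d}" "\<lambda>u. (-1) ^ C * (-1) ^ card {y\<in>Y. y \<le> u} * Q" "\<lambda>u. u \<in> Y"]
        by simp
    qed simp
    also have "\<dots> = (if even m then (-1) ^ C * Q * (\<Sum>u\<in>Y - {a, d}. (-1) ^ card {y\<in>Y. y \<le> u}) else 0)"
      by (simp add: sum_distrib_left sum_distrib_right algebra_simps)
    finally have E: "(\<Sum>u\<in>U - {a, d}. (-1) ^ card {x\<in>U. x \<le> u} * coef q (U - {u}) W) =
       (if even m then (-1) ^ C * Q * (\<Sum>u\<in>Y - {a, d}. (-1) ^ card {y\<in>Y. y \<le> u}) else 0)" .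
    show ?thesis
    proof (cases "even m")
      case True
      have "(\<Sum>u\<in>Y - {a, d}. (-1::'r) ^ card {y\<in>Y. y \<le> u}) = (if a \<in> Y then 1 else 0) - (if d \<in> Y then 1 else 0)"
        using sumY True by simp
      then show ?thesis unfolding E using True by simp
    next
      case False then show ?thesis unfolding E by simp
    qed
  qed
  have R1: "(if d \<in> W then coef q (U - {a, d}) (W - {d}) else 0) =
      (if d \<in> W \<and> a \<in> Y \<and> even m then (-1) ^ C * Q else 0)"
  proof (cases "d \<in> W \<and> a \<in> Y")
    case True
    have e: "U - {a, d} - (W - {d}) = Y - {a}" using True Y_def ad by auto
    have cd: "card (Y - {a}) = m - 1" using True fY m_def by simp
    have m1: "m \<ge> 1" using True fY m_def card_0_eq by fastforce
    have sub: "W - {d} \<subseteq> U - {a, d}" using True WU Y_def by auto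
    have c1: "C = invc (U - {d}) (W - {d}) + card {y\<in>U - W. d < y}"
      using invc_remove_W[OF fU _ WU, of d] True C_def by simp
    have c2: "{y\<in>U - W. d < y} = {}" using bnd by fastforce
    have c3: "invc (U - {d}) (W - {d}) = invc (U - {d} - {a}) (W - {d}) + card {w\<in>W - {d}. w < a}"
      using invc_remove_Y[of "U - {d}" a "W - {d}"] fU aU ad True Y_def by auto
    have c4: "{w\<in>W - {d}. w < a} = {}" using bnd WU by fastforce
    have c5: "U - {d} - {a} = U - {a, d}" by auto
    have Ce: "C = invc (U - {a, d}) (W - {d})"
      using c1[unfolded c2] c3[unfolded c4 c5] by simp
    have ell: "ellJ (U - {a, d}) (U - {a, d} - (W - {d})) = C"
      using ellJ_invc[OF _ sub] fU Ce by simp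
    have pm: "odd (card (Y - {a})) = even m" using cd odd_m1[OF m1] by simp
    show ?thesis using True e cd m1 sub ell pm unfolding coef_def Q_def
      by (auto simp: numeral_2_eq_2)
  next
    case False
    then show ?thesis
    proof (cases "d \<in> W")
      case True
      then have "a \<in> W" using False Y_def aU by auto
      then have "\<not> W - {d} \<subseteq> U - {a, d}" using ad by auto
      then show ?thesis using False by (auto simp: coef_def)
    qed simp
  qed
  have R2: "(-1) ^ card U * (if a \<in> W then coef q (U - {a, d}) (W - {a}) else 0) =
      (if a \<in> W \<and> d \<in> Y \<and> even m then - ((-1) ^ C * Q) else 0)"
  proof (cases "a \<in> W \<and> d \<in> Y")
    case True
    have e: "U - {a, d} - (W - {a}) = Y - {d}" using True Y_def ad by auto
    have cd: "card (Y - {d}) = m - 1" using True fY m_def by simp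
    have m1: "m \<ge> 1" using True fY m_def card_0_eq by fastforce
    have sub: "W - {a} \<subseteq> U - {a, d}" using True WU Y_def by auto
    have c1: "C = invc (U - {a}) (W - {a}) + card {y\<in>U - W. a < y}"
      using invc_remove_W[OF fU _ WU, of a] True C_def by simp
    have c2: "{y\<in>U - W. a < y} = Y" using bnd True Y_def by (auto simp: order.order_iff_strict)
    have c3: "invc (U - {a}) (W - {a}) = invc (U - {a} - {d}) (W - {a}) + card {w\<in>W - {a}. w < d}"
      using invc_remove_Y[of "U - {a}" d "W - {a}"] fU dU ad True Y_def by auto
    have c4: "{w\<in>W - {a}. w < d} = W - {a}" using bnd WU True Y_def
      by (auto simp: order.order_iff_strict)
    have c5: "U - {a} - {d} = U - {a, d}" by auto
    have c6: "card (W - {a}) = card W - 1" using fW True by simp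
    have Ce: "C = invc (U - {a, d}) (W - {a}) + (card W - 1) + m"
      using c1[unfolded c2] c3[unfolded c4 c5 c6] by (simp add: m_def)
    have cW: "card W \<ge> 1" using True fW card_0_eq by fastforce
    have pm: "odd (card (Y - {d})) = even m" using cd odd_m1[OF m1] by simp
    have ell: "ellJ (U - {a, d}) (U - {a, d} - (W - {a})) = invc (U - {a, d}) (W - {a})"
      using ellJ_invc[OF _ sub] fU by simp
    have sgn: "(-1::'r) ^ card U * (-1) ^ invc (U - {a, d}) (W - {a}) = - ((-1) ^ C)"
    proof -
      have "card U + invc (U - {a, d}) (W - {a}) = Suc C" using Ce cardU cW by simp
      then have "(-1::'r) ^ (card U + invc (U - {a, d}) (W - {a})) = - ((-1) ^ C)" by simp
      then show ?thesis by (simp add: power_add)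
    qed
    have "coef q (U - {a, d}) (W - {a}) = (if even m then (-1) ^ invc (U - {a, d}) (W - {a}) * Q else 0)"
      using e cd m1 sub ell pm unfolding coef_def Q_def by (auto simp: numeral_2_eq_2)
    then show ?thesis using True sgn by (auto simp: mult.assoc[symmetric])
  next
    case False
    then show ?thesis
    proof (cases "a \<in> W")
      case True
      then have "d \<in> W" using False Y_def dU by auto
      then have "\<not> W - {a} \<subseteq> U - {a, d}" using ad by auto
      then show ?thesis using False True by (auto simp: coef_def)
    qed simp
  qed
  show ?thesis unfolding LHS R1 R2 using aU dU unfolding Y_def by (cases "a \<in> W"; cases "d \<in> W"; cases "even m") simp_all
qed

lemma drop_snoc_eq: "k \<le> Suc (length xs) \<Longrightarrow> (drop k (xs @ [x]) = [d]) = (k = length xs \<and> x = d)"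
proof (cases "k \<le> length xs")
  case True
  then have "drop k (xs @ [x]) = drop k xs @ [x]" by simp
  moreover have "(drop k xs = []) = (k = length xs)" using True by auto
  ultimately show ?thesis by auto
next
  case False
  moreover assume "k \<le> Suc (length xs)"
  ultimately have "k = Suc (length xs)" by simp
  then show ?thesis by simp
qed

lemma mult_right:
  "fa_mult f (tJ {d}) w = (if w \<noteq> [] \<and> last w = d then f (butlast w) else (0::'r::comm_ring_1))"
proof (cases w rule: rev_exhaust)
  case Nil
  then show ?thesis by (simp add: fa_mult_def tJ_def fa_mono_def)
next
  case (snoc xs x)
  have "fa_mult f (tJ {d}) w = (\<Sum>k\<le>Suc (length xs). if k = length xs then (if x = d then f xs else 0) else 0)"
    unfolding fa_mult_def tJ_def fa_mono_def snoc
  proof (rule sum.cong)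
    fix k assume k: "k \<in> {..Suc (length xs)}"
    then have "(drop k (xs @ [x]) = [d]) = (k = length xs \<and> x = d)" by (intro drop_snoc_eq) auto
    then show "f (take k (xs @ [x])) * (if drop k (xs @ [x]) = sorted_list_of_set {d} then 1 else 0) =
        (if k = length xs then (if x = d then f xs else 0) else 0)"
      by auto
  qed simp
  also have "\<dots> = (if x = d then f xs else 0)"
    by (subst sum.delta) auto
  finally show ?thesis using snoc by simp
qed

lemma mult_left:
  "fa_mult (tJ {a}) f w = (if w \<noteq> [] \<and> hd w = a then f (tl w) else (0::'r::comm_ring_1))"
proof (cases w)
  case Nil
  then show ?thesis by (simp add: fa_mult_def tJ_def fa_mono_def)
next
  case (Cons x xs)
  have "fa_mult (tJ {a}) f w = (\<Sum>k\<le>Suc (length xs). if k = 1 then (if x = a then f xs else 0) else 0)"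
    unfolding fa_mult_def tJ_def fa_mono_def Cons
  proof (rule sum.cong)
    fix k assume k: "k \<in> {..Suc (length xs)}"
    have "(take k (x # xs) = [a]) = (k = 1 \<and> x = a)"
    proof (cases k)
      case 0 then show ?thesis by simp
    next
      case (Suc j)
      then show ?thesis using k by (cases j) auto
    qed
    then show "(if take k (x # xs) = sorted_list_of_set {a} then 1 else 0) * f (drop k (x # xs)) =
        (if k = 1 then (if x = a then f xs else 0) else 0)"
      by auto
  qed simp
  also have "\<dots> = (if x = a then f xs else 0)"
    by (subst sum.delta) auto
  finally show ?thesis using Cons by simp
qed

lemma coef_zero: "z \<in> W \<Longrightarrow> z \<notin> X \<Longrightarrow> coef q X W = 0"
  by (auto simp: coef_def)

lemma right_red:
  assumes "finite L" "\<forall>x\<in>L. x < d"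
  shows "(if w \<noteq> [] \<and> last w = d then tau_minus q L (butlast w) else 0) =
    (if sorted_wrt (<) w then (if d \<in> set w then coef q L (set w - {d}) else 0) else 0)"
proof (cases w rule: rev_exhaust)
  case Nil
  then show ?thesis by simp
next
  case (snoc xs x)
  note tev = tau_eval[OF assms(1)]
  show ?thesis
  proof (cases "x = d")
    case True
    have dx: "d \<notin> set xs \<Longrightarrow> set w - {d} = set xs" using snoc True by auto
    show ?thesis
    proof (cases "sorted_wrt (<) xs")
      case sx: True
      show ?thesis
      proof (cases "\<forall>y\<in>set xs. y < d")
        case True
        then have "d \<notin> set xs" by auto
        then show ?thesis using snoc \<open>x = d\<close> sx True dx by (simp add: sorted_wrt_append tev)
      next
        case False
        then obtain y where y: "y \<in> set xs" "\<not> y < d" by auto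
        then have "y \<notin> L" using assms by auto
        then have "coef q L (set xs) = 0" using y coef_zero by metis
        then show ?thesis using snoc \<open>x = d\<close> sx False by (auto simp: sorted_wrt_append tev)
      qed
    next
      case False
      then show ?thesis using snoc \<open>x = d\<close> by (auto simp: sorted_wrt_append tev)
    qed
  next
    case False
    have "sorted_wrt (<) w \<Longrightarrow> d \<in> set w \<Longrightarrow> coef q L (set w - {d}) = 0"
    proof -
      assume s: "sorted_wrt (<) w" and d: "d \<in> set w"
      then have "d \<in> set xs" using snoc False by auto
      then have "d < x" using s snoc by (auto simp: sorted_wrt_append)
      then have "x \<notin> L" using assms by auto
      moreover have "x \<in> set w - {d}" using snoc False by auto
      ultimately show ?thesis using coef_zero by metis
    qed
    then show ?thesis using snoc False by auto
  qed
qed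

lemma left_red:
  assumes "finite L" "\<forall>x\<in>L. a < x"
  shows "(if w \<noteq> [] \<and> hd w = a then tau_minus q L (tl w) else 0) =
    (if sorted_wrt (<) w then (if a \<in> set w then coef q L (set w - {a}) else 0) else 0)"
proof (cases w)
  case Nil
  then show ?thesis by simp
next
  case (Cons x xs)
  note tev = tau_eval[OF assms(1)]
  show ?thesis
  proof (cases "x = a")
    case True
    have dx: "a \<notin> set xs \<Longrightarrow> set w - {a} = set xs" using Cons True by auto
    show ?thesis
    proof (cases "sorted_wrt (<) xs")
      case sx: True
      show ?thesis
      proof (cases "\<forall>y\<in>set xs. a < y")
        case True
        then have "a \<notin> set xs" by auto
        then show ?thesis using Cons \<open>x = a\<close> sx True dx by (simp add: tev)
      next
        case False
        then obtain y where y: "y \<in> set xs" "\<not> a < y" by auto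
        then have "y \<notin> L" using assms by auto
        then have "coef q L (set xs) = 0" using y coef_zero by metis
        then show ?thesis using Cons \<open>x = a\<close> sx False by (auto simp: tev)
      qed
    next
      case False
      then show ?thesis using Cons \<open>x = a\<close> by (auto simp: tev)
    qed
  next
    case False
    have "sorted_wrt (<) w \<Longrightarrow> a \<in> set w \<Longrightarrow> coef q L (set w - {a}) = 0"
    proof -
      assume s: "sorted_wrt (<) w" and d: "a \<in> set w"
      then have "a \<in> set xs" using Cons False by auto
      then have "x < a" using s Cons by auto
      then have "x \<notin> L" using assms by auto
      moreover have "x \<in> set w - {a}" using Cons False by auto
      ultimately show ?thesis using coef_zero by metis
    qed
    then show ?thesis using Cons False by auto
  qed
qed

lemma elt_in: "finite X \<Longrightarrow> 1 \<le> i \<Longrightarrow> i \<le> card X \<Longrightarrow> elt X i \<in> X"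
  using elt_bij[of X] by (auto simp: bij_betw_def)

lemma elt_inj: "finite X \<Longrightarrow> inj_on (elt X) {1..card X}"
  using elt_bij[of X] by (auto simp: bij_betw_def)

lemma elt_min:
  assumes "finite X" "x \<in> X"
  shows "elt X 1 \<le> x"
proof (rule ccontr)
  assume "\<not> elt X 1 \<le> x"
  then have lt: "x < elt X 1" by simp
  have c1: "1 \<le> card X" using assms card_0_eq by fastforce
  have e: "elt X 1 \<in> X" using elt_in[OF assms(1) _ c1] by simp
  have "{x, elt X 1} \<subseteq> {j\<in>X. j \<le> elt X 1}" using lt e assms by auto
  then have "card {x, elt X 1} \<le> card {j\<in>X. j \<le> elt X 1}" using assms by (intro card_mono) auto
  also have "\<dots> = 1" using rank_elt[OF assms(1) _ c1] by simp
  finally show False using lt by simp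
qed

lemma elt_max:
  assumes "finite X" "x \<in> X"
  shows "x \<le> elt X (card X)"
proof -
  have c1: "1 \<le> card X" using assms card_0_eq by fastforce
  have "card {j\<in>X. j \<le> elt X (card X)} = card X" using rank_elt[OF assms(1) c1] by simp
  then have "{j\<in>X. j \<le> elt X (card X)} = X" using assms(1)
    by (metis (no_types, lifting) card_subset_eq mem_Collect_eq subsetI)
  then show ?thesis using assms by blast
qed

lemma strict_sorted_eq_single:
  fixes w :: "'a::linorder list"
  assumes "sorted_wrt (<) w" shows "(w = [x]) = (set w = {x})"
proof
  assume "set w = {x}"
  then have "sorted_list_of_set (set w) = [x]" by simp
  moreover have "sorted_list_of_set (set w) = w" using assms
    by (simp add: sorted_list_of_set.idem_if_sorted_distinct strict_sorted_iff)
  ultimately show "w = [x]" by simp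
qed simp

lemma tau_single: "tau_minus q {b} v = (if v = [] then 1 else (0::'r::comm_ring_1))"
proof -
  have e: "ellJ {b} {b} = 0" using ellJ_invc[of "{b}" "{}"] by (simp add: invc_def)
  show ?thesis
  proof (cases "v = []")
    case True then show ?thesis by (simp add: tau_eval coef_def e)
  next
    case False
    then have "set v \<noteq> {}" by simp
    then have "set v \<subseteq> {b} \<Longrightarrow> set v = {b}" by (simp add: subset_singleton_iff)
    then have "coef q {b} (set v) = 0" by (auto simp: coef_def)
    then show ?thesis using False by (simp add: tau_eval)
  qed
qed

lemma coef_pair:
  assumes "(a::'a::linorder) < d"
  shows "coef q {a, d} W = (if W = {d} then 1 else if W = {a} then -1 else (0::'r::comm_ring_1))"
proof (cases "W \<subseteq> {a, d}")
  case False
  then have "W \<noteq> {d}" "W \<noteq> {a}" by auto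
  then show ?thesis using False by (simp add: coef_def)
next
  case True
  then have "W = {} \<or> W = {a} \<or> W = {d} \<or> W = {a, d}" by blast
  moreover have "coef q {a, d} {} = 0" using assms by (simp add: coef_def)
  moreover have "coef q {a, d} {a, d} = 0" by (simp add: coef_def)
  moreover have "coef q {a, d} {a} = -1"
  proof -
    have e: "{a, d} - {a} = {d}" using assms by auto
    have "{w \<in> {a}. w < d} = {a}" using assms by auto
    then have "ellJ {a, d} {d} = 1" using ellJ_invc[of "{a, d}" "{a}"] assms e
      by (simp add: invc_def)
    then show ?thesis using e by (simp add: coef_def)
  qed
  moreover have "coef q {a, d} {d} = 1"
  proof -
    have e: "{a, d} - {d} = {a}" using assms by auto
    have "{w \<in> {d}. w < a} = {}" using assms by auto
    then have "ellJ {a, d} {a} = 0" using ellJ_invc[of "{a, d}" "{d}"] assms e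
      by (simp add: invc_def)
    then show ?thesis using e by (simp add: coef_def)
  qed
  ultimately show ?thesis using assms by auto
qed

lemma alg4: "(x::'a::ab_group_add) - s = r - t \<Longrightarrow> x - r - s + t = 0"
  by (metis add.commute add_diff_cancel_left' diff_add_cancel diff_diff_eq2 diff_self)

theorem lemma3p3:
  fixes S :: "'a::linorder set" and q :: "'r::comm_ring_1" and J L :: "'a set" and n :: nat
  assumes "finite S" and "J \<subseteq> S" and "L \<subseteq> S"
    and "n = card J" and "n \<ge> 2" and "L \<noteq> {}"
    and "J - {elt J 1, elt J n} = L - {elt L 1}"
    and "elt J 1 < elt L 1"
  shows "fa_add
           (fa_sub
             (fa_sub (tau_minus q J) (fa_mult (tau_minus q L) (tJ {elt J n})))
             (fa_sum (\<lambda>i. fa_smult ((-1) ^ i) (tau_minus q ((J \<union> L) - {elt J i}))) {2..n-1}))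
           (fa_smult ((-1) ^ n) (fa_mult (tJ {elt J 1}) (tau_minus q L)))
         = (fa_zero :: ('a, 'r) falg)"
proof -
  have fJ: "finite J" using assms(1,2) finite_subset by blast
  have fL: "finite L" using assms(1,3) finite_subset by blast
  define a where "a = elt J 1"
  define d where "d = elt J n"
  define b where "b = elt L 1"
  define U where "U = J \<union> L"
  define Mid where "Mid = J - {a, d}"
  have fU: "finite U" using fJ fL U_def by simp
  have cL: "1 \<le> card L" using fL assms(6) card_0_eq by fastforce
  have aJ: "a \<in> J" using elt_in[OF fJ, of 1] assms(4,5) a_def by simp
  have dJ: "d \<in> J" using elt_in[OF fJ, of n] assms(4,5) d_def by simp
  have bL: "b \<in> L" using elt_in[OF fL, of 1] cL b_def by simp
  have amin: "\<And>x. x \<in> J \<Longrightarrow> a \<le> x" using elt_min[OF fJ] a_def by simp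
  have dmax: "\<And>x. x \<in> J \<Longrightarrow> x \<le> d" using elt_max[OF fJ] d_def assms(4) by simp
  have bmin: "\<And>x. x \<in> L \<Longrightarrow> b \<le> x" using elt_min[OF fL] b_def by simp
  have ab: "a < b" using assms(8) a_def b_def by simp
  have ad: "a \<noteq> d"
  proof
    assume "a = d"
    then have "elt J 1 = elt J n" using a_def d_def by simp
    moreover have "1 \<in> {1..card J}" "n \<in> {1..card J}" using assms(4,5) by auto
    ultimately have "(1::nat) = n" using elt_inj[OF fJ] by (meson inj_on_eq_iff)
    then show False using assms(5) by simp
  qed
  have ad': "a < d" using ad amin[OF dJ] by simp
  have MidL: "Mid = L - {b}" using assms(7) Mid_def a_def d_def b_def by simp
  have aL: "a \<notin> L" using bmin ab by force
  have key: "\<And>w. tau_minus q J w - fa_mult (tau_minus q L) (tJ {d}) w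
      - (\<Sum>i\<in>{2..n-1}. (-1) ^ i * tau_minus q (U - {elt J i}) w)
      + (-1) ^ n * fa_mult (tJ {a}) (tau_minus q L) w = 0"
  proof -
    fix w
    note MRt = mult_right[of "tau_minus q L" d w]
    note MLf = mult_left[of a "tau_minus q L" w]
    show "tau_minus q J w - fa_mult (tau_minus q L) (tJ {d}) w
      - (\<Sum>i\<in>{2..n-1}. (-1) ^ i * tau_minus q (U - {elt J i}) w)
      + (-1) ^ n * fa_mult (tJ {a}) (tau_minus q L) w = 0"
    proof (cases "n = 2")
      case True
      have cMid: "card Mid = 0" using Mid_def fJ aJ dJ ad assms(4) True by (simp add: card_Diff_subset)
      then have "Mid = {}" using Mid_def fJ by simp
      then have Jad: "J = {a, d}" using Mid_def aJ dJ by auto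
      have Lb: "L = {b}" using \<open>Mid = {}\<close> MidL bL by auto
      have e0: "{2..n-1} = ({}::nat set)" using True by simp
      have R: "fa_mult (tau_minus q L) (tJ {d}) w = (if w = [d] then 1 else 0)"
        unfolding MRt unfolding Lb tau_single by (cases w rule: rev_exhaust) auto
      have Lf: "fa_mult (tJ {a}) (tau_minus q L) w = (if w = [a] then 1 else 0)"
        unfolding MLf unfolding Lb tau_single by (cases w) auto
      show ?thesis
      proof (cases "sorted_wrt (<) w")
        case False
        then have "w \<noteq> [d]" "w \<noteq> [a]" by auto
        then show ?thesis unfolding R Lf e0 using False fJ by (simp add: tau_eval)
      next
        case st: True
        show ?thesis unfolding R Lf e0 using st fJ ad
          by (simp add: tau_eval Jad coef_pair[OF ad'] strict_sorted_eq_single True)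
      qed
    next
      case False
      then have n3: "n \<ge> 3" using assms(5) by simp
      have cMid: "card Mid = n - 2" using Mid_def fJ aJ dJ ad assms(4) by (simp add: card_Diff_subset)
      then obtain c0 where c0: "c0 \<in> Mid" using n3 by (metis card.empty card_0_eq ex_in_conv
          finite_Diff fJ Mid_def diff_is_0_eq le_trans not_numeral_le_zero numeral_le_iff semiring_norm(68)
          zero_less_diff Suc_leI numeral_3_eq_3 numeral_2_eq_2 not_less_eq_eq)
      have midb: "\<And>c. c \<in> Mid \<Longrightarrow> b < c" using MidL bmin by (metis DiffE insertI1 order_le_neq_trans)
      have midad: "\<And>c. c \<in> Mid \<Longrightarrow> a < c \<and> c < d" using Mid_def amin dmax
        by (metis DiffE insertCI order_le_neq_trans)
      have bd: "b < d" using midb[OF c0] midad[OF c0] by (meson less_trans)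
      have bJ: "b \<notin> J"
      proof
        assume "b \<in> J"
        moreover have "b \<noteq> a" "b \<noteq> d" using ab bd by auto
        ultimately have "b \<in> Mid" using Mid_def by simp
        then show False using MidL by simp
      qed
      have Lins: "L = insert b Mid" using MidL bL by auto
      have UJ: "U = insert b J" using U_def Lins Mid_def by auto
      have UL: "U - {a, d} = L" using UJ Lins Mid_def aL ab bd by auto
      have Ub: "U - {b} = J" using UJ bJ by auto
      have bndU: "\<forall>x\<in>U. a \<le> x \<and> x \<le> d" using UJ amin dmax ab bd by auto
      have cU: "card U = Suc n" using UJ bJ fJ assms(4) by simp
      have Lltd: "\<forall>x\<in>L. x < d" using Lins bd midad by auto
      have Lgta: "\<forall>x\<in>L. a < x" using Lins ab midad by auto
      have R: "fa_mult (tau_minus q L) (tJ {d}) w =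
          (if sorted_wrt (<) w then (if d \<in> set w then coef q L (set w - {d}) else 0) else 0)"
        using MRt right_red[OF fL Lltd, of w q] by simp
      have Lf: "fa_mult (tJ {a}) (tau_minus q L) w =
          (if sorted_wrt (<) w then (if a \<in> set w then coef q L (set w - {a}) else 0) else 0)"
        using MLf left_red[OF fL Lgta, of w q] by simp
      show ?thesis
      proof (cases "sorted_wrt (<) w")
        case False
        then show ?thesis unfolding R Lf using fJ fU by (simp add: tau_eval)
      next
        case True
        define W where "W = set w"
        have gen: "(\<Sum>u\<in>L. (-1) ^ card {x\<in>U. x \<le> u} * coef q (U - {u}) W) =
            (if d \<in> W then coef q L (W - {d}) else 0)
            + (-1) ^ Suc n * (if a \<in> W then coef q L (W - {a}) else 0)"
          using generic[OF fU _ _ ad' bndU, of q W] UJ aJ dJ UL cU by simp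
        have pb: "card {x\<in>U. x \<le> b} = 2"
        proof -
          have "{x\<in>U. x \<le> b} = {a, b}"
          proof (intro equalityI subsetI)
            fix x assume x: "x \<in> {x\<in>U. x \<le> b}"
            show "x \<in> {a, b}"
            proof (cases "x = b \<or> x = a")
              case False
              then have "x \<in> J" using x UJ by auto
              moreover have "x \<noteq> d" using x bd by auto
              ultimately have "x \<in> Mid" using False Mid_def by auto
              then show ?thesis using midb x by force
            qed auto
          qed (use UJ aJ ab in auto)
          then show ?thesis using ab by simp
        qed
        have split: "(\<Sum>u\<in>L. (-1) ^ card {x\<in>U. x \<le> u} * coef q (U - {u}) W) =
            coef q J W + (\<Sum>u\<in>Mid. (-1) ^ card {x\<in>U. x \<le> u} * coef q (U - {u}) W)"
          using sum.remove[OF fL bL, of "\<lambda>u. (-1) ^ card {x\<in>U. x \<le> u} * coef q (U - {u}) W"] MidL pb Ub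
          by simp
        have nset: "{2..n-1} = {1..card J} - {1, n}" using assms(4) n3 by auto
        have injm: "inj_on (elt J) {2..n-1}" using elt_inj[OF fJ] nset by (metis Diff_subset inj_on_subset)
        have img: "elt J ` {2..n-1} = Mid"
        proof -
          have "elt J ` {2..n-1} = elt J ` {1..card J} - elt J ` {1, n}"
            unfolding nset using elt_inj[OF fJ] assms(4,5)
            by (intro inj_on_image_set_diff) auto
          also have "\<dots> = J - {a, d}" using elt_bij[OF fJ] a_def d_def by (simp add: bij_betw_def)
          finally show ?thesis using Mid_def by simp
        qed
        have posi: "\<And>i. i \<in> {2..n-1} \<Longrightarrow> card {x\<in>U. x \<le> elt J i} = Suc i"
        proof -
          fix i assume i: "i \<in> {2..n-1}"
          have eM: "elt J i \<in> Mid" using img i by blast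
          have "{x\<in>U. x \<le> elt J i} = insert b {x\<in>J. x \<le> elt J i}"
            using UJ midb[OF eM] by auto
          then have "card {x\<in>U. x \<le> elt J i} = Suc (card {x\<in>J. x \<le> elt J i})"
            using bJ fJ by simp
          also have "\<dots> = Suc i" using rank_elt[OF fJ, of i] i assms(4) by auto
          finally show "card {x\<in>U. x \<le> elt J i} = Suc i" .
        qed
        have reidx: "(\<Sum>u\<in>Mid. (-1) ^ card {x\<in>U. x \<le> u} * coef q (U - {u}) W) =
            - (\<Sum>i\<in>{2..n-1}. (-1) ^ i * coef q (U - {elt J i}) W)"
        proof -
          have "(\<Sum>u\<in>Mid. (-1) ^ card {x\<in>U. x \<le> u} * coef q (U - {u}) W) =
              (\<Sum>i\<in>{2..n-1}. (-1) ^ card {x\<in>U. x \<le> elt J i} * coef q (U - {elt J i}) W)"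
            unfolding img[symmetric] using injm by (simp add: sum.reindex)
          also have "\<dots> = (\<Sum>i\<in>{2..n-1}. - ((-1) ^ i * coef q (U - {elt J i}) W))"
            by (rule sum.cong[OF refl]) (simp add: posi)
          finally show ?thesis by (simp add: sum_negf)
        qed
        have tJe: "tau_minus q J w = coef q J W" using True W_def by (simp add: tau_eval[OF fJ])
        have tUe: "\<And>i. tau_minus q (U - {elt J i}) w = coef q (U - {elt J i}) W"
          using fU True W_def by (simp add: tau_eval)
        have "coef q J W - (\<Sum>i\<in>{2..n-1}. (-1) ^ i * coef q (U - {elt J i}) W) =
            (if d \<in> W then coef q L (W - {d}) else 0)
            - (-1) ^ n * (if a \<in> W then coef q L (W - {a}) else 0)"
          using gen split reidx by simp
        note H = alg4[OF this]
        show ?thesis unfolding R Lf tJe tUe W_def[symmetric] using True H by simp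
      qed
    qed
  qed
  show ?thesis
    unfolding fa_add_def fa_sub_def fa_sum_def fa_smult_def fa_zero_def
    using key[unfolded a_def d_def U_def] by (intro ext) simp
qed

end
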